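(* Let $\eta$ be a probability distribution on $\mathbb{R}$ with finite mean $m(\eta)=\int x\,d\eta(x)$ whose support is not bounded from above (i.e. $\eta((y,\infty))>0$ for every $y\in\mathbb{R}$). Then for every finite $a>0$ and every $b>m(\eta)$ there exists a probability distribution $\kappa$ on $\mathbb{R}$ such that \[ \mathrm{KL}(\eta,\kappa)\le a \qquad\text{and}\qquad m(\kappa)\ge b . \]
   Context: $\mathrm{KL}(\eta,\kappa)=\int \log\big(\tfrac{d\eta}{d\kappa}(x)\big)\,d\eta(x)$ if $\eta\ll\kappa$ and $+\infty$ otherwise (Kullback–Leibler divergence). $m(\kappa)$ denotes the mean of $\kappa$. *)

theory Defs
  imports "HOL-Probability.Probability"
begin

text \<open>The negative part of the integrand is always
  eta-integrable when kappa is a probability measure, so the integral is infinite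
  exactly when the integrand is not eta-integrable.\<close>

definition KL :: "'a measure \<Rightarrow> 'a measure \<Rightarrow> ereal" where
  "KL \<eta> \<kappa> =
     (if absolutely_continuous \<kappa> \<eta> \<and> sets \<eta> = sets \<kappa> \<and>
         integrable \<eta> (\<lambda>x. ln (enn2real (RN_deriv \<kappa> \<eta> x)))
      then ereal (\<integral>x. ln (enn2real (RN_deriv \<kappa> \<eta> x)) \<partial>\<eta>)
      else \<infinity>)"

end

theory Submission
  imports Defs
begin

theorem lemma1:
  fixes \<eta> :: "real measure" and a b :: real
  assumes "prob_space \<eta>" and "sets \<eta> = sets borel"
    and "integrable \<eta> (\<lambda>x. x)"
    and "\<And>y. measure \<eta> {y<..} > 0"
    and "a > 0" and "b > (\<integral>x. x \<partial>\<eta>)"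
  shows "\<exists>\<kappa> :: real measure. prob_space \<kappa> \<and> sets \<kappa> = sets borel \<and>
           KL \<eta> \<kappa> \<le> ereal a \<and>
           integrable \<kappa> (\<lambda>x. x) \<and> (\<integral>x. x \<partial>\<kappa>) \<ge> b"
proof -
  interpret P: prob_space \<eta> by fact
  note sets = assms(2)
  have meas[measurable_cong]: "sets \<eta> = sets borel" by fact
  define e where "e = exp (-a)"
  define m where "m = (\<integral>x. x \<partial>\<eta>)"
  have e0: "0 < e" and e1: "e < 1" using assms(5) by (auto simp: e_def)
  define y where "y = (b - e * m) / (1 - e)"
  define p where "p = measure \<eta> {y<..}"
  have p0: "p > 0" using assms(4) p_def by auto
  define c where "c = (1 - e) / p"
  have c0: "c > 0" using e1 p0 by (simp add: c_def)
  define g where "g x = e + c * indicator {y<..} x" for x :: real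
  have gm[measurable]: "g \<in> borel_measurable \<eta>" unfolding g_def by (simp add: measurable_cong_sets[OF sets refl])
  have gpos: "g x \<ge> e" for x using c0 by (auto simp: g_def indicator_def)
  have gle: "g x \<le> e + c" for x using c0 by (auto simp: g_def indicator_def)
  have Yset: "{y<..} \<in> sets \<eta>" using sets by simp
  have ig: "integrable \<eta> g" unfolding g_def
    using Yset by (intro Bochner_Integration.integrable_add P.integrable_const integrable_mult_right integrable_real_indicator) (auto simp: P.emeasure_eq_measure)
  have intg: "(\<integral>x. g x \<partial>\<eta>) = 1"
  proof -
    have ii: "integrable \<eta> (indicator {y<..} :: real \<Rightarrow> real)"
      using Yset by (intro integrable_real_indicator) (auto simp: P.emeasure_eq_measure)
    have "(\<integral>x. g x \<partial>\<eta>) = (\<integral>x. e \<partial>\<eta>) + (\<integral>x. c * indicator {y<..} x \<partial>\<eta>)"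
      unfolding g_def using ii by (intro Bochner_Integration.integral_add) auto
    also have "\<dots> = e + c * p" using Yset by (simp add: p_def P.prob_space)
    also have "\<dots> = 1" using p0 by (simp add: c_def)
    finally show ?thesis .
  qed
  define \<kappa> where "\<kappa> = density \<eta> (\<lambda>x. ennreal (g x))"
  have sk: "sets \<kappa> = sets borel" using sets by (simp add: \<kappa>_def)
  have pk: "prob_space \<kappa>"
  proof
    have "emeasure \<kappa> (space \<kappa>) = (\<integral>\<^sup>+x. ennreal (g x) \<partial>\<eta>)"
      by (simp add: \<kappa>_def emeasure_density nn_integral_density)
    also have "\<dots> = ennreal (\<integral>x. g x \<partial>\<eta>)"
      using ig gpos e0 by (intro nn_integral_eq_integral) (auto intro: less_imp_le order_trans[OF less_imp_le])
    finally show "emeasure \<kappa> (space \<kappa>) = 1" using intg by simp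
  qed
  interpret K: prob_space \<kappa> by fact
  have eta_eq: "density \<kappa> (\<lambda>x. ennreal (1 / g x)) = \<eta>"
  proof -
    have "density \<kappa> (\<lambda>x. ennreal (1 / g x)) = density \<eta> (\<lambda>x. ennreal (g x) * ennreal (1 / g x))"
      unfolding \<kappa>_def by (rule density_density_eq) auto
    also have "\<dots> = density \<eta> (\<lambda>_. 1)"
    proof -
      have "ennreal (g x) * ennreal (1 / g x) = 1" for x
        using gpos[of x] e0 by (subst ennreal_mult''[symmetric]) auto
      then show ?thesis by simp
    qed
    finally show ?thesis by (simp add: density_1)
  qed
  have km: "(\<lambda>x. ennreal (1 / g x)) \<in> borel_measurable \<kappa>"
  proof -
    have gb[measurable]: "g \<in> borel_measurable borel" using gm measurable_cong_sets[OF sets refl] by simp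
    show ?thesis unfolding measurable_cong_sets[OF sk refl] by measurable
  qed
  have ac: "absolutely_continuous \<kappa> \<eta>"
    using absolutely_continuousI_density[OF km] eta_eq by simp
  have "AE x in \<kappa>. ennreal (1 / g x) = RN_deriv \<kappa> \<eta> x"
    by (rule K.RN_deriv_unique[OF km eta_eq])
  then have AErn: "AE x in \<eta>. ennreal (1 / g x) = RN_deriv \<kappa> \<eta> x"
    using ac sk sets by (intro absolutely_continuous_AE[of \<eta> \<kappa>]) auto
  have AEln: "AE x in \<eta>. ln (enn2real (RN_deriv \<kappa> \<eta> x)) = - ln (g x)"
    using AErn
  proof eventually_elim
    case (elim x)
    then have "enn2real (RN_deriv \<kappa> \<eta> x) = 1 / g x"
      using gpos[of x] e0 by (metis enn2real_ennreal less_le_trans less_imp_le zero_le_divide_1_iff)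
    then show ?case using gpos[of x] e0 by (simp add: ln_div)
  qed
  have lnm: "(\<lambda>x. - ln (g x)) \<in> borel_measurable \<eta>" by measurable
  have lnb: "norm (- ln (g x)) \<le> \<bar>ln e\<bar> + \<bar>ln (e + c)\<bar>" for x
  proof -
    have "ln e \<le> ln (g x)" using gpos[of x] e0 by simp
    moreover have "ln (g x) \<le> ln (e + c)" using gle[of x] gpos[of x] e0 by simp
    ultimately show ?thesis by auto
  qed
  have il: "integrable \<eta> (\<lambda>x. - ln (g x))"
    by (rule P.integrable_const_bound[where B="\<bar>ln e\<bar> + \<bar>ln (e + c)\<bar>"]) (use lnb lnm in auto)
  have ske: "sets \<kappa> = sets \<eta>" using sk sets by simp
  have rn[measurable]: "RN_deriv \<kappa> \<eta> \<in> borel_measurable \<eta>"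
    using borel_measurable_RN_deriv[of \<kappa> \<eta>] unfolding measurable_cong_sets[OF ske refl] .
  have rnm: "(\<lambda>x. ln (enn2real (RN_deriv \<kappa> \<eta> x))) \<in> borel_measurable \<eta>" by measurable
  have ilr: "integrable \<eta> (\<lambda>x. ln (enn2real (RN_deriv \<kappa> \<eta> x)))"
    using integrable_cong_AE[OF rnm lnm AEln] il by simp
  have "(\<integral>x. ln (enn2real (RN_deriv \<kappa> \<eta> x)) \<partial>\<eta>) = (\<integral>x. - ln (g x) \<partial>\<eta>)"
    by (rule integral_cong_AE[OF rnm lnm AEln])
  also have "\<dots> \<le> (\<integral>x. a \<partial>\<eta>)"
  proof (rule integral_mono[OF il])
    fix x
    have "ln e \<le> ln (g x)" using gpos[of x] e0 by simp
    then show "- ln (g x) \<le> a" by (simp add: e_def)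
  qed auto
  also have "\<dots> = a" by (simp add: P.prob_space)
  finally have KLle: "KL \<eta> \<kappa> \<le> ereal a"
    unfolding KL_def using ac sk sets ilr by simp
  have ih: "integrable \<eta> (\<lambda>x. indicator {y<..} x * x)"
    using integrable_real_mult_indicator[OF Yset assms(3)] by (simp add: mult.commute)
  have ix: "integrable \<eta> (\<lambda>x. g x *\<^sub>R x)"
  proof -
    have "integrable \<eta> (\<lambda>x. e * x + c * (indicator {y<..} x * x))"
      using assms(3) ih by (intro Bochner_Integration.integrable_add integrable_mult_right) auto
    then show ?thesis by (simp add: g_def algebra_simps)
  qed
  have ik: "integrable \<kappa> (\<lambda>x. x)"
    unfolding \<kappa>_def using ix gpos e0
    by (subst integrable_density) (auto simp: measurable_cong_sets[OF sets refl] intro: order_trans[OF less_imp_le])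
  have "(\<integral>x. x \<partial>\<kappa>) = (\<integral>x. g x *\<^sub>R x \<partial>\<eta>)"
    unfolding \<kappa>_def using gpos e0
    by (subst integral_density) (auto simp: measurable_cong_sets[OF sets refl] intro: order_trans[OF less_imp_le])
  also have "\<dots> = e * m + c * (\<integral>x. indicator {y<..} x * x \<partial>\<eta>)"
  proof -
    have "(\<lambda>x. g x *\<^sub>R x) = (\<lambda>x. e * x + c * (indicator {y<..} x * x))"
      by (auto simp: g_def algebra_simps)
    then show ?thesis using assms(3) ih
      by (simp add: Bochner_Integration.integral_add m_def)
  qed
  also have "\<dots> \<ge> e * m + c * (y * p)"
  proof -
    have "(\<integral>x. indicator {y<..} x * y \<partial>\<eta>) \<le> (\<integral>x. indicator {y<..} x * x \<partial>\<eta>)"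
    proof (rule integral_mono[OF _ ih])
      show "integrable \<eta> (\<lambda>x. indicator {y<..} x * y)"
        using Yset by (intro integrable_mult_left integrable_real_indicator) (auto simp: P.emeasure_eq_measure)
    qed (auto simp: indicator_def)
    moreover have "(\<integral>x. indicator {y<..} x * y \<partial>\<eta>) = y * p"
      using Yset by (simp add: p_def)
    ultimately show ?thesis using c0 by (simp add: p_def mult.commute)
  qed
  finally have I: "(\<integral>x. x \<partial>\<kappa>) \<ge> e * m + c * (y * p)" .
  have "e * m + c * (y * p) = b"
    using e1 p0 by (simp add: c_def y_def field_simps)
  with I have "(\<integral>x. x \<partial>\<kappa>) \<ge> b" by simp
  then show ?thesis using pk sk KLle ik by blast
qed

end
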